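(* Let $\chi:\mathbb{R}\to\mathbb{R}$ be a kernel satisfying $(\chi_1)$ and $(\chi_2)$, and let $f\in AC(\mathbb{R})$. Then for every $w>0$, every $m\in\mathbb{N}$ with $m\ge1$, and every $t\in\mathbb{R}$, $$(\bar S^m_w f)'(t)=\frac1m\sum_{i=1}^m (K_w f')\left(t-\frac{m-2(i-1)}{2w}\right).$$
   Context: For $f:\mathbb{R}\to\mathbb{R}$, $V[f]$ denotes the Jordan variation of $f$ over $\mathbb{R}$ (supremum over compact intervals $[a,b]$ of the supremum over partitions $a=x_0<\dots<x_n=b$ of $\sum_i|f(x_i)-f(x_{i-1})|$); $BV(\mathbb{R})=\{f: V[f]<\infty\}$; $AC(\mathbb{R}):=BV(\mathbb{R})\cap AC_{loc}(\mathbb{R})$, where $AC_{loc}(\mathbb{R})$ is the set of functions absolutely continuous on every compact interval. A kernel $\chi:\mathbb{R}\to\mathbb{R}$ satisfies: $(\chi_1)$ $\chi\in L^1(\mathbb{R})$ is continuous and $\sum_{k\in\mathbb{Z}}\chi(u-k)=1$ for all $u\in\mathbb{R}$; $(\chi_2)$ $\sup_{u\in\mathbb{R}}\sum_{k\in\mathbb{Z}}|\chi(u-k)|<+\infty$, the series converging uniformly on compact sets. The averaged kernel is $\bar\chi_m(t):=\frac1m\int_{-m/2}^{m/2}\chi(t+v)\,dv$, and $(\bar S^m_w f)(t):=\sum_{k\in\mathbb{Z}} f(k/w)\,\bar\chi_m(wt-k)$, $t\in\mathbb{R}$, $w>0$. The sampling Kantorovich operators based on $\chi$ are $(K_w g)(t):=\sum_{k\in\mathbb{Z}}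 w\left(\int_{k/w}^{(k+1)/w} g(u)\,du\right)\chi(wt-k)$, $t\in\mathbb{R}$, $w>0$, for locally integrable $g$. *)

theory Defs
  imports "HOL-Analysis.Analysis"
begin

definition interval_variation :: "(real \<Rightarrow> real) \<Rightarrow> real \<Rightarrow> real \<Rightarrow> ereal" where
  "interval_variation f a b =
     (SUP p \<in> {(n, x). n \<ge> 1 \<and> x 0 = a \<and> x n = b \<and> (\<forall>i<n. x i < x (Suc i))}.
        ereal (\<Sum>i<fst p. \<bar>f (snd p (Suc i)) - f (snd p i)\<bar>))"

definition jordan_variation :: "(real \<Rightarrow> real) \<Rightarrow> ereal" where
  "jordan_variation f = (SUP ab \<in> {(a, b). a < b}. interval_variation f (fst ab) (snd ab))"

definition BV :: "(real \<Rightarrow> real) set" where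
  "BV = {f. jordan_variation f < \<infinity>}"

definition abs_cont_on_interval :: "real \<Rightarrow> real \<Rightarrow> (real \<Rightarrow> real) \<Rightarrow> bool" where
  "abs_cont_on_interval a b f \<longleftrightarrow>
     (\<forall>\<epsilon>>0. \<exists>\<delta>>0. \<forall>(n::nat) (l::nat \<Rightarrow> real) (r::nat \<Rightarrow> real).
        (\<forall>i<n. a \<le> l i \<and> l i < r i \<and> r i \<le> b) \<and>
        (\<forall>i<n. \<forall>j<n. i \<noteq> j \<longrightarrow> r i \<le> l j \<or> r j \<le> l i) \<and>
        (\<Sum>i<n. r i - l i) < \<delta> \<longrightarrow>
        (\<Sum>i<n. \<bar>f (r i) - f (l i)\<bar>) < \<epsilon>)"

definition AC_loc :: "(real \<Rightarrow> real) set" where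
  "AC_loc = {f. \<forall>a b. a \<le> b \<longrightarrow> abs_cont_on_interval a b f}"

definition AC :: "(real \<Rightarrow> real) set" where
  "AC = BV \<inter> AC_loc"

definition kernel_chi1 :: "(real \<Rightarrow> real) \<Rightarrow> bool" where
  "kernel_chi1 chi \<longleftrightarrow> integrable lborel chi \<and> continuous_on UNIV chi \<and>
     (\<forall>u. ((\<lambda>k::int. chi (u - real_of_int k)) has_sum 1) UNIV)"

definition kernel_chi2 :: "(real \<Rightarrow> real) \<Rightarrow> bool" where
  "kernel_chi2 chi \<longleftrightarrow>
     (\<exists>M. \<forall>u. (\<lambda>k::int. \<bar>chi (u - real_of_int k)\<bar>) summable_on UNIV \<and>
             (\<Sum>\<^sub>\<infinity>k::int. \<bar>chi (u - real_of_int k)\<bar>) \<le> M) \<and>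
     (\<forall>C. compact C \<longrightarrow>
        uniform_limit C (\<lambda>n u. \<Sum>k\<in>{- int n..int n}. \<bar>chi (u - real_of_int k)\<bar>)
                        (\<lambda>u. \<Sum>\<^sub>\<infinity>k::int. \<bar>chi (u - real_of_int k)\<bar>) sequentially)"

definition avg_kernel :: "(real \<Rightarrow> real) \<Rightarrow> nat \<Rightarrow> real \<Rightarrow> real" where
  "avg_kernel chi m t = (1 / real m) * integral {- real m / 2 .. real m / 2} (\<lambda>v. chi (t + v))"

definition Sbar :: "(real \<Rightarrow> real) \<Rightarrow> nat \<Rightarrow> real \<Rightarrow> (real \<Rightarrow> real) \<Rightarrow> real \<Rightarrow> real" where
  "Sbar chi m w f t = (\<Sum>\<^sub>\<infinity>k::int. f (real_of_int k / w) * avg_kernel chi m (w * t - real_of_int k))"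

definition Kant :: "(real \<Rightarrow> real) \<Rightarrow> real \<Rightarrow> (real \<Rightarrow> real) \<Rightarrow> real \<Rightarrow> real" where
  "Kant chi w g t = (\<Sum>\<^sub>\<infinity>k::int. w * integral {real_of_int k / w .. (real_of_int k + 1) / w} g
                                  * chi (w * t - real_of_int k))"

end

theory Submission
  imports Defs
begin

lemma disjoint_open_intervals:
  fixes l1 r1 l2 r2 :: real
  assumes "l1 < r1" "l2 < r2" "{l1<..<r1} \<inter> {l2<..<r2} = {}"
  shows "r1 \<le> l2 \<or> r2 \<le> l1"
proof (rule ccontr)
  assume "\<not> ?thesis"
  then have "l2 < r1" "l1 < r2" by auto
  define z where "z = (max l1 l2 + min r1 r2) / 2"
  have "z \<in> {l1<..<r1} \<inter> {l2<..<r2}" using assms \<open>l2 < r1\<close> \<open>l1 < r2\<close>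
    unfolding z_def by (auto simp: max_def min_def split: if_split_asm)
  with assms show False by blast
qed

lemma ac_pairs:
  assumes ac: "abs_cont_on_interval a b f" and e: "\<epsilon> > 0"
  obtains \<delta> where "\<delta> > 0" and
    "\<And>P. finite P \<Longrightarrow> (\<forall>(x,K)\<in>P. \<exists>u v. K = {u..v} \<and> a \<le> u \<and> u \<le> v \<and> v \<le> b) \<Longrightarrow>
      (\<forall>p1\<in>P. \<forall>p2\<in>P. p1 \<noteq> p2 \<longrightarrow> interior (snd p1) \<inter> interior (snd p2) = {}) \<Longrightarrow>
      (\<Sum>(x,K)\<in>P. Sup K - Inf K) < \<delta> \<Longrightarrow> (\<Sum>(x,K)\<in>P. \<bar>f (Sup K) - f (Inf K)\<bar>) < \<epsilon>"
proof -
  have acd: "\<forall>\<epsilon>>0. \<exists>\<delta>>0. \<forall>(n::nat) (l::nat \<Rightarrow> real) (r::nat \<Rightarrow> real).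
        (\<forall>i<n. a \<le> l i \<and> l i < r i \<and> r i \<le> b) \<and>
        (\<forall>i<n. \<forall>j<n. i \<noteq> j \<longrightarrow> r i \<le> l j \<or> r j \<le> l i) \<and>
        (\<Sum>i<n. r i - l i) < \<delta> \<longrightarrow>
        (\<Sum>i<n. \<bar>f (r i) - f (l i)\<bar>) < \<epsilon>"
    using ac unfolding abs_cont_on_interval_def .
  note ex0 = spec[OF acd, of \<epsilon>]
  have ex: "\<exists>\<delta>>0. \<forall>(n::nat) (l::nat \<Rightarrow> real) (r::nat \<Rightarrow> real).
        (\<forall>i<n. a \<le> l i \<and> l i < r i \<and> r i \<le> b) \<and>
        (\<forall>i<n. \<forall>j<n. i \<noteq> j \<longrightarrow> r i \<le> l j \<or> r j \<le> l i) \<and>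
        (\<Sum>i<n. r i - l i) < \<delta> \<longrightarrow>
        (\<Sum>i<n. \<bar>f (r i) - f (l i)\<bar>) < \<epsilon>" using mp[OF ex0 e] .
  obtain \<delta> where dd: "\<delta> > 0 \<and> (\<forall>(n::nat) (l::nat \<Rightarrow> real) (r::nat \<Rightarrow> real). (\<forall>i<n. a \<le> l i \<and> l i < r i \<and> r i \<le> b) \<and>
        (\<forall>i<n. \<forall>j<n. i \<noteq> j \<longrightarrow> r i \<le> l j \<or> r j \<le> l i) \<and>
        (\<Sum>i<n. r i - l i) < \<delta> \<longrightarrow>
        (\<Sum>i<n. \<bar>f (r i) - f (l i)\<bar>) < \<epsilon>)" by (rule exE[OF ex])
  then have d: "\<delta> > 0" and D0: "(\<forall>(n::nat) (l::nat \<Rightarrow> real) (r::nat \<Rightarrow> real). (\<forall>i<n. a \<le> l i \<and> l i < r i \<and> r i \<le> b) \<and>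
        (\<forall>i<n. \<forall>j<n. i \<noteq> j \<longrightarrow> r i \<le> l j \<or> r j \<le> l i) \<and>
        (\<Sum>i<n. r i - l i) < \<delta> \<longrightarrow>
        (\<Sum>i<n. \<bar>f (r i) - f (l i)\<bar>) < \<epsilon>)" by (rule conjunct1, rule conjunct2)
  note D = D0[rule_format]
  show ?thesis
  proof (rule that[OF d])
    fix P :: "('x \<times> real set) set"
    assume fin: "finite P" and iv: "\<forall>(x,K)\<in>P. \<exists>u v. K = {u..v} \<and> a \<le> u \<and> u \<le> v \<and> v \<le> b"
      and dis: "\<forall>p1\<in>P. \<forall>p2\<in>P. p1 \<noteq> p2 \<longrightarrow> interior (snd p1) \<inter> interior (snd p2) = {}"
      and sm: "(\<Sum>(x,K)\<in>P. Sup K - Inf K) < \<delta>"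
    define P' where "P' = {p\<in>P. Inf (snd p) < Sup (snd p)}"
    have iv': "\<And>x K. (x,K) \<in> P \<Longrightarrow> \<exists>u v. K = {u..v} \<and> a \<le> u \<and> u \<le> v \<and> v \<le> b"
      using iv by blast
    have fin': "finite P'" using fin unfolding P'_def by simp
    have sub: "P' \<subseteq> P" unfolding P'_def by auto
    have z1: "\<forall>p\<in>P - P'. (case p of (x,K) \<Rightarrow> Sup K - Inf K) = 0"
    proof
      fix p assume "p \<in> P - P'"
      then obtain x K where p: "p = (x,K)" "(x,K) \<in> P" "\<not> Inf K < Sup K" unfolding P'_def by (cases p) auto
      then obtain u v where "K = {u..v}" "u \<le> v" using iv' by blast
      then show "(case p of (x,K) \<Rightarrow> Sup K - Inf K) = 0" using p by auto
    qed
    have z2: "\<forall>p\<in>P - P'. (case p of (x,K) \<Rightarrow> \<bar>f (Sup K) - f (Inf K)\<bar>) = 0"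
    proof
      fix p assume "p \<in> P - P'"
      then obtain x K where p: "p = (x,K)" "(x,K) \<in> P" "\<not> Inf K < Sup K" unfolding P'_def by (cases p) auto
      then obtain u v where "K = {u..v}" "u \<le> v" using iv' by blast
      then show "(case p of (x,K) \<Rightarrow> \<bar>f (Sup K) - f (Inf K)\<bar>) = 0" using p by auto
    qed
    have s1: "(\<Sum>(x,K)\<in>P. Sup K - Inf K) = (\<Sum>(x,K)\<in>P'. Sup K - Inf K)"
      using sum.mono_neutral_right[OF fin sub z1] by simp
    have s2: "(\<Sum>(x,K)\<in>P. \<bar>f (Sup K) - f (Inf K)\<bar>) = (\<Sum>(x,K)\<in>P'. \<bar>f (Sup K) - f (Inf K)\<bar>)"
      using sum.mono_neutral_right[OF fin sub z2] by simp
    obtain h where h: "bij_betw h {0..<card P'} P'" using ex_bij_betw_nat_finite[OF fin'] by blast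
    define n where "n = card P'"
    define l where "l i = Inf (snd (h i))" for i
    define r where "r i = Sup (snd (h i))" for i
    have hP: "\<And>i. i < n \<Longrightarrow> h i \<in> P'" using h unfolding n_def bij_betw_def by auto
    have hinj: "\<And>i j. i < n \<Longrightarrow> j < n \<Longrightarrow> i \<noteq> j \<Longrightarrow> h i \<noteq> h j"
      using h unfolding n_def bij_betw_def inj_on_def by auto
    have hiv: "\<And>i. i < n \<Longrightarrow> snd (h i) = {l i..r i} \<and> a \<le> l i \<and> l i < r i \<and> r i \<le> b"
    proof -
      fix i assume "i < n"
      then have "h i \<in> P'" by (rule hP)
      then obtain x K where hx: "h i = (x,K)" "(x,K) \<in> P" "Inf K < Sup K" unfolding P'_def by (cases "h i") auto
      then obtain u v where "K = {u..v}" "a \<le> u" "u \<le> v" "v \<le> b" using iv' by blast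
      then show "snd (h i) = {l i..r i} \<and> a \<le> l i \<and> l i < r i \<and> r i \<le> b"
        using hx unfolding l_def r_def by auto
    qed
    have c1: "\<forall>i<n. a \<le> l i \<and> l i < r i \<and> r i \<le> b" using hiv by blast
    have c2: "\<forall>i<n. \<forall>j<n. i \<noteq> j \<longrightarrow> r i \<le> l j \<or> r j \<le> l i"
    proof (intro allI impI)
      fix i j assume ij: "i < n" "j < n" "i \<noteq> j"
      have "interior (snd (h i)) \<inter> interior (snd (h j)) = {}"
        using dis hinj[OF ij] hP ij sub by blast
      then have "{l i<..<r i} \<inter> {l j<..<r j} = {}" using hiv ij by simp
      then show "r i \<le> l j \<or> r j \<le> l i" using disjoint_open_intervals hiv ij by blast
    qed
    have e1: "(\<Sum>i<n. r i - l i) = (\<Sum>(x,K)\<in>P'. Sup K - Inf K)"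
      using sum.reindex_bij_betw[OF h, of "\<lambda>(x,K). Sup K - Inf K"]
      by (simp add: n_def l_def r_def lessThan_atLeast0 split_beta)
    have e2: "(\<Sum>i<n. \<bar>f (r i) - f (l i)\<bar>) = (\<Sum>(x,K)\<in>P'. \<bar>f (Sup K) - f (Inf K)\<bar>)"
      using sum.reindex_bij_betw[OF h, of "\<lambda>(x,K). \<bar>f (Sup K) - f (Inf K)\<bar>"]
      by (simp add: n_def l_def r_def lessThan_atLeast0 split_beta)
    have "(\<Sum>i<n. \<bar>f (r i) - f (l i)\<bar>) < \<epsilon>"
      using D[of n l r] c1 c2 e1 sm s1 by simp
    then show "(\<Sum>(x,K)\<in>P. \<bar>f (Sup K) - f (Inf K)\<bar>) < \<epsilon>" using e2 s2 by simp
  qed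
qed

lemma ftc_ac:
  fixes f g :: "real \<Rightarrow> real"
  assumes ab: "a \<le> b" and ac: "abs_cont_on_interval a b f" and E: "negligible E"
    and der: "\<And>x. x \<in> {a..b} \<Longrightarrow> x \<notin> E \<Longrightarrow> (f has_real_derivative g x) (at x)"
  shows "(g has_integral (f b - f a)) {a..b}"
proof -
  define g0 where "g0 x = (if x \<in> E then 0 else g x)" for x
  have "(g0 has_integral (f b - f a)) (cbox a b)"
  proof (subst has_integral, intro allI impI)
    fix \<epsilon> :: real assume ep: "\<epsilon> > 0"
    obtain \<delta> where dpos: "\<delta> > 0" and acP:
      "\<And>P::(real \<times> real set) set. finite P \<Longrightarrow> (\<forall>(x,K)\<in>P. \<exists>u v. K = {u..v} \<and> a \<le> u \<and> u \<le> v \<and> v \<le> b) \<Longrightarrow>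
      (\<forall>p1\<in>P. \<forall>p2\<in>P. p1 \<noteq> p2 \<longrightarrow> interior (snd p1) \<inter> interior (snd p2) = {}) \<Longrightarrow>
      (\<Sum>(x,K)\<in>P. Sup K - Inf K) < \<delta> \<Longrightarrow> (\<Sum>(x,K)\<in>P. \<bar>f (Sup K) - f (Inf K)\<bar>) < \<epsilon>/2"
      by (rule ac_pairs[OF ac half_gt_zero[OF ep]]) blast
    have indE: "(indicator E has_integral (0::real)) (cbox a b)" using E unfolding negligible_def by simp
    from indE[unfolded has_integral, rule_format, OF dpos] obtain \<gamma>1 where g1: "gauge \<gamma>1" and \<gamma>1': "\<forall>D. D tagged_division_of cbox a b \<and> \<gamma>1 fine D \<longrightarrow>
        norm ((\<Sum>(x,K)\<in>D. Henstock_Kurzweil_Integration.content K *\<^sub>R (indicator E x :: real)) - 0) < \<delta>"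
      by auto
    have \<gamma>1: "\<And>D. D tagged_division_of cbox a b \<Longrightarrow> \<gamma>1 fine D \<Longrightarrow>
        norm ((\<Sum>(x,K)\<in>D. Henstock_Kurzweil_Integration.content K *\<^sub>R (indicator E x :: real)) - 0) < \<delta>" using \<gamma>1' by blast
    define e' where "e' = \<epsilon> / (2 * (b - a + 1))"
    have e'pos: "e' > 0" unfolding e'_def using ep ab by simp
    have "\<forall>x. \<exists>d>0. x \<in> {a..b} \<and> x \<notin> E \<longrightarrow>
        (\<forall>y. \<bar>y - x\<bar> < d \<longrightarrow> \<bar>f y - f x - (y - x) * g x\<bar> \<le> e' * \<bar>y - x\<bar>)"
    proof
      fix x
      show "\<exists>d>0. x \<in> {a..b} \<and> x \<notin> E \<longrightarrow>
        (\<forall>y. \<bar>y - x\<bar> < d \<longrightarrow> \<bar>f y - f x - (y - x) * g x\<bar> \<le> e' * \<bar>y - x\<bar>)"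
      proof (cases "x \<in> {a..b} \<and> x \<notin> E")
        case True
        then have "(f has_derivative (\<lambda>h. g x * h)) (at x)"
          using der unfolding has_field_derivative_def by auto
        then show ?thesis unfolding has_derivative_at_alt using e'pos
          by (auto simp: real_norm_def mult.commute)
      next
        case False then show ?thesis by (intro exI[of _ 1]) auto
      qed
    qed
    then obtain d where dpos': "\<And>x. d x > 0" and d: "\<And>x y. x \<in> {a..b} \<Longrightarrow> x \<notin> E \<Longrightarrow> \<bar>y - x\<bar> < d x \<Longrightarrow>
        \<bar>f y - f x - (y - x) * g x\<bar> \<le> e' * \<bar>y - x\<bar>"
      by metis
    show "\<exists>\<gamma>. gauge \<gamma> \<and> (\<forall>\<D>. \<D> tagged_division_of cbox a b \<and> \<gamma> fine \<D> \<longrightarrow>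
           norm ((\<Sum>(x, k)\<in>\<D>. Henstock_Kurzweil_Integration.content k *\<^sub>R g0 x) - (f b - f a)) < \<epsilon>)"
    proof (intro exI conjI allI impI)
      show "gauge (\<lambda>x. \<gamma>1 x \<inter> ball x (d x))" using g1 gauge_ball_dependent[of d] dpos' by (intro gauge_Int) auto
      fix p assume "p tagged_division_of cbox a b \<and> (\<lambda>x. \<gamma>1 x \<inter> ball x (d x)) fine p"
      then have ptag: "p tagged_division_of {a..b}" and f1: "\<gamma>1 fine p" and f2: "(\<lambda>x. ball x (d x)) fine p"
        by (auto simp: fine_Int)
      have fin: "finite p" using ptag by blast
      have ivl: "\<And>x K. (x,K) \<in> p \<Longrightarrow> \<exists>u v. K = {u..v} \<and> a \<le> u \<and> u \<le> x \<and> x \<le> v \<and> v \<le> b"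
      proof -
        fix x K assume xK: "(x,K) \<in> p"
        then obtain u v where K: "K = cbox u v" using ptag by blast
        have "x \<in> K" "K \<subseteq> {a..b}" using ptag xK by blast+
        then show "\<exists>u v. K = {u..v} \<and> a \<le> u \<and> u \<le> x \<and> x \<le> v \<and> v \<le> b" using K
          by (intro exI[of _ u] exI[of _ v]) auto
      qed
      define F where "F = (\<lambda>(x::real,K::real set). Henstock_Kurzweil_Integration.content K * g0 x - (f (Sup K) - f (Inf K)))"
      have add: "(\<Sum>(x,K)\<in>p. f (Sup K) - f (Inf K)) = f b - f a"
        using additive_tagged_division_1[OF ab ptag, of f] by simp
      have addid: "(\<Sum>(x,K)\<in>p. Sup K - Inf K) = b - a"
        using additive_tagged_division_1[OF ab ptag, of "\<lambda>x. x"] by simp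
      have eq1: "(\<Sum>(x, k)\<in>p. Henstock_Kurzweil_Integration.content k *\<^sub>R g0 x) - (f b - f a) = sum F p"
        unfolding add[symmetric] F_def by (simp add: sum_subtractf split_beta)
      define p1 where "p1 = {q\<in>p. fst q \<notin> E}"
      define p2 where "p2 = {q\<in>p. fst q \<in> E}"
      have split: "sum F p = sum F p1 + sum F p2"
        unfolding p1_def p2_def using fin
        by (subst sum.union_disjoint[symmetric]) (auto intro: sum.cong)
      have b1: "\<bar>sum F p1\<bar> \<le> e' * (b - a)"
      proof -
        have "\<bar>sum F p1\<bar> \<le> (\<Sum>(x,K)\<in>p1. e' * (Sup K - Inf K))"
        proof (rule order_trans[OF sum_abs], rule sum_mono)
          fix q assume q: "q \<in> p1"
          obtain x K where qq: "q = (x,K)" by (cases q)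
          have xK: "(x,K) \<in> p" "x \<notin> E" using q qq unfolding p1_def by auto
          obtain u v where K: "K = {u..v}" "a \<le> u" "u \<le> x" "x \<le> v" "v \<le> b" using ivl[OF xK(1)] by blast
          have xab: "x \<in> {a..b}" using K by auto
          have ball: "K \<subseteq> ball x (d x)" using f2 xK(1) unfolding fine_def by blast
          have "u \<in> K" "v \<in> K" using K by auto
          then have "u \<in> ball x (d x)" "v \<in> ball x (d x)" using ball by blast+
          then have du: "\<bar>u - x\<bar> < d x" "\<bar>v - x\<bar> < d x" by (auto simp: dist_real_def)
          have "\<bar>(v - u) * g x - (f v - f u)\<bar> \<le> \<bar>f u - f x - (u - x) * g x\<bar> + \<bar>f v - f x - (v - x) * g x\<bar>"
            by (simp add: algebra_simps)
          also have "\<dots> \<le> e' * \<bar>u - x\<bar> + e' * \<bar>v - x\<bar>"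
            using d[OF xab xK(2) du(1)] d[OF xab xK(2) du(2)] by simp
          also have "\<dots> = e' * (v - u)" using K by (simp add: algebra_simps)
          finally show "\<bar>F q\<bar> \<le> (case q of (x,K) \<Rightarrow> e' * (Sup K - Inf K))"
            unfolding F_def qq g0_def using K xK by simp
        qed
        also have "\<dots> \<le> (\<Sum>(x,K)\<in>p. e' * (Sup K - Inf K))"
        proof (rule sum_mono2[OF fin])
          show "p1 \<subseteq> p" unfolding p1_def by auto
          show "\<And>q. q \<in> p - p1 \<Longrightarrow> 0 \<le> (case q of (x,K) \<Rightarrow> e' * (Sup K - Inf K))"
          proof -
            fix q assume "q \<in> p - p1"
            then obtain x K where "(x,K) \<in> p" "q = (x,K)" by (cases q) auto
            then show "0 \<le> (case q of (x,K) \<Rightarrow> e' * (Sup K - Inf K))"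
              using ivl e'pos by fastforce
          qed
        qed
        also have "\<dots> = e' * (b - a)" using addid by (simp add: sum_distrib_left[symmetric] split_beta)
        finally show ?thesis .
      qed
      have b2: "\<bar>sum F p2\<bar> < \<epsilon>/2"
      proof -
        have "sum F p2 = - (\<Sum>(x,K)\<in>p2. f (Sup K) - f (Inf K))"
          unfolding F_def p2_def g0_def by (simp add: sum_subtractf split_beta)
        then have "\<bar>sum F p2\<bar> \<le> (\<Sum>(x,K)\<in>p2. \<bar>f (Sup K) - f (Inf K)\<bar>)"
          by (simp add: split_beta sum_abs)
        also have "\<dots> < \<epsilon>/2"
        proof (rule acP)
          show "finite p2" using fin unfolding p2_def by simp
          show "\<forall>(x,K)\<in>p2. \<exists>u v. K = {u..v} \<and> a \<le> u \<and> u \<le> v \<and> v \<le> b"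
            using ivl unfolding p2_def by fastforce
          show "\<forall>p1\<in>p2. \<forall>p2a\<in>p2. p1 \<noteq> p2a \<longrightarrow> interior (snd p1) \<inter> interior (snd p2a) = {}"
            using tagged_division_ofD(5)[OF ptag] unfolding p2_def by fastforce
          have "(\<Sum>(x,K)\<in>p2. Sup K - Inf K) = (\<Sum>(x,K)\<in>p2. Henstock_Kurzweil_Integration.content K)"
          proof (rule sum.cong[OF refl])
            fix q assume "q \<in> p2"
            then obtain x K where "(x,K) \<in> p" "q = (x,K)" unfolding p2_def by (cases q) auto
            then show "(case q of (x,K) \<Rightarrow> Sup K - Inf K) = (case q of (x,K) \<Rightarrow> Henstock_Kurzweil_Integration.content K)"
              using ivl by fastforce
          qed
          also have "\<dots> = (\<Sum>(x,K)\<in>p. Henstock_Kurzweil_Integration.content K *\<^sub>R (indicator E x :: real))"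
            unfolding p2_def using fin
            by (simp add: sum.inter_filter sum.inter_restrict split_beta indicator_def if_distrib cong: if_cong)
          also have "\<dots> < \<delta>" using \<gamma>1[OF _ f1] ptag by simp
          finally show "(\<Sum>(x,K)\<in>p2. Sup K - Inf K) < \<delta>" .
        qed
        finally show ?thesis .
      qed
      have "e' * (b - a) < \<epsilon>/2"
        unfolding e'_def using ep ab by (simp add: field_simps)
      then show "norm ((\<Sum>(x, k)\<in>p. Henstock_Kurzweil_Integration.content k *\<^sub>R g0 x) - (f b - f a)) < \<epsilon>"
        unfolding eq1 split using b1 b2 by simp
    qed
  qed
  then have "(g0 has_integral (f b - f a)) {a..b}" by simp
  then show ?thesis
    by (rule has_integral_spike[OF E, rotated]) (simp add: g0_def)
qed

lemma bv_step:
  fixes f :: "real \<Rightarrow> real"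
  assumes ab: "a < b"
  shows "ereal \<bar>f b - f a\<bar> \<le> jordan_variation f"
proof -
  define x where "x = (\<lambda>i::nat. if i = 0 then a else b)"
  have mem: "(1::nat, x) \<in> {(n, x). n \<ge> 1 \<and> x 0 = a \<and> x n = b \<and> (\<forall>i<n. x i < x (Suc i))}"
    using ab by (simp add: x_def)
  have "ereal \<bar>f b - f a\<bar> \<le> interval_variation f a b"
    unfolding interval_variation_def
    by (rule SUP_upper2[OF mem]) (simp add: x_def)
  also have "\<dots> \<le> jordan_variation f"
    unfolding jordan_variation_def
    by (rule SUP_upper2[of "(a,b)"]) (use ab in auto)
  finally show ?thesis .
qed

lemma bv_bounded:
  fixes f :: "real \<Rightarrow> real"
  assumes "f \<in> BV"
  obtains B where "\<And>x. \<bar>f x\<bar> \<le> B"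
proof -
  have V: "jordan_variation f < \<infinity>" using assms by (simp add: BV_def)
  have "ereal 0 \<le> jordan_variation f"
    using bv_step[of 0 1 f] by (metis abs_ge_zero ereal_less_eq(3) order_trans zero_less_one)
  then obtain V' where V': "jordan_variation f = ereal V'" using V
    by (cases "jordan_variation f") auto
  have hb: "\<bar>f x - f 0\<bar> \<le> V'" for x
  proof -
    consider "x < 0" | "x = 0" | "0 < x" by linarith
    then show ?thesis
    proof cases
      case 1 then show ?thesis using bv_step[of x 0 f] V' by (simp add: abs_minus_commute)
    next
      case 2 then show ?thesis using bv_step[of 0 1 f] V' by simp
    next
      case 3 then show ?thesis using bv_step[of 0 x f] V' by simp
    qed
  qed
  have "\<bar>f x\<bar> \<le> \<bar>f 0\<bar> + V'" for x
    using abs_triangle_ineq[of "f x - f 0" "f 0"] hb[of x] by simp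
  then show ?thesis using that by blast
qed

lemma ae_negligible:
  assumes "AE x in lborel. P x"
  obtains E where "negligible E" "\<And>x. x \<notin> E \<Longrightarrow> P x"
proof -
  from assms obtain N where N: "{x \<in> space lborel. \<not> P x} \<subseteq> N" "emeasure lborel N = 0" "N \<in> sets lborel"
    by (rule AE_E)
  have "N \<in> null_sets lborel" using N by auto
  then have "N \<in> null_sets lebesgue" by (rule null_sets_completionI)
  then have "negligible N" by (simp add: negligible_iff_null_sets)
  moreover have "\<And>x. x \<notin> N \<Longrightarrow> P x" using N(1) by auto
  ultimately show ?thesis using that by blast
qed

lemma avg_deriv:
  fixes chi :: "real \<Rightarrow> real"
  assumes cont: "continuous_on UNIV chi"
  shows "(avg_kernel chi m has_real_derivative (1 / real m) * (chi (u + real m / 2) - chi (u - real m / 2))) (at u)"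
proof -
  define c where "c = real m / 2"
  have c0: "c \<ge> 0" unfolding c_def by simp
  define A where "A = u - c - 1"
  define B where "B = u + c + 1"
  define \<Phi> where "\<Phi> x = integral {A..x} chi" for x
  have intg: "\<And>a b. chi integrable_on {a..b}"
    using cont by (meson continuous_on_subset integrable_continuous_real subset_UNIV)
  have eq: "avg_kernel chi m y = (1 / real m) * (\<Phi> (y + c) - \<Phi> (y - c))" if y: "y \<in> ball u 1" for y
  proof -
    have "(\<lambda>v. chi (y + v)) = chi \<circ> (+) y" by auto
    then have "integral {- real m / 2 .. real m / 2} (\<lambda>v. chi (y + v)) = integral {-c + y .. c + y} chi"
      using integral_shift_Icc_real[of "-c" c chi y] unfolding c_def by simp
    also have "\<dots> = \<Phi> (y + c) - \<Phi> (y - c)"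
    proof -
      have "A \<le> y - c" using y unfolding A_def by (auto simp: dist_real_def)
      moreover have "y - c \<le> y + c" using c0 by simp
      ultimately have "integral {A..y - c} chi + integral {y - c..y + c} chi = integral {A..y + c} chi"
        using Henstock_Kurzweil_Integration.integral_combine[OF _ _ intg] by blast
      then show ?thesis unfolding \<Phi>_def by (simp add: algebra_simps)
    qed
    finally show ?thesis unfolding avg_kernel_def by simp
  qed
  have dphi: "(\<Phi> has_real_derivative chi x) (at x)" if "A < x" "x < B" for x
  proof -
    have "(\<Phi> has_real_derivative chi x) (at x within {A..B})"
      unfolding \<Phi>_def
      by (rule integral_has_real_derivative) (use that cont continuous_on_subset in auto)
    moreover have "x \<in> interior {A..B}" using that by simp
    ultimately show ?thesis using at_within_interior by metis
  qed
  have i1: "((\<lambda>y. y + c) has_real_derivative 1) (at u)"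
    using DERIV_add[OF DERIV_ident DERIV_const[of c]] by simp
  have i2: "((\<lambda>y. y - c) has_real_derivative 1) (at u)"
    using DERIV_diff[OF DERIV_ident DERIV_const[of c]] by simp
  have r1: "A < u + c" "u + c < B" "A < u - c" "u - c < B" using c0 unfolding A_def B_def by auto
  have d1: "((\<lambda>y. \<Phi> (y + c)) has_real_derivative chi (u + c)) (at u)"
    using DERIV_chain2[OF dphi[OF r1(1,2)] i1] by simp
  have d2: "((\<lambda>y. \<Phi> (y - c)) has_real_derivative chi (u - c)) (at u)"
    using DERIV_chain2[OF dphi[OF r1(3,4)] i2] by simp
  have "((\<lambda>y. (1 / real m) * (\<Phi> (y + c) - \<Phi> (y - c))) has_real_derivative
        (1 / real m) * (chi (u + c) - chi (u - c))) (at u)"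
    by (intro DERIV_cmult DERIV_diff d1 d2)
  then have "(avg_kernel chi m has_real_derivative (1 / real m) * (chi (u + c) - chi (u - c))) (at u)"
    by (rule has_field_derivative_transform_within_open[of _ _ _ "ball u 1"]) (use eq in auto)
  then show ?thesis unfolding c_def .
qed

lemma kant_int:
  fixes f f' :: "real \<Rightarrow> real"
  assumes ac: "f \<in> AC_loc" and E: "negligible E" and der: "\<And>x. x \<notin> E \<Longrightarrow> (f has_real_derivative f' x) (at x)"
    and ab: "a \<le> b"
  shows "integral {a..b} f' = f b - f a"
proof -
  have "abs_cont_on_interval a b f" using ac ab by (simp add: AC_loc_def)
  then have "(f' has_integral (f b - f a)) {a..b}"
    using ftc_ac[OF ab _ E] der by blast
  then show ?thesis by (rule integral_unique)
qed

lemma tail_bound: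
  fixes x h :: "int \<Rightarrow> real"
  assumes hs: "h summable_on UNIV" and hx: "\<And>k. \<bar>x k\<bar> \<le> h k" and F: "finite F"
  shows "x summable_on UNIV" and "\<bar>infsum x UNIV - sum x F\<bar> \<le> infsum h UNIV - sum h F"
proof -
  have h0: "0 \<le> h k" for k using hx[of k] abs_ge_zero[of "x k"] by linarith
  have nx: "(\<lambda>k. norm (x k)) summable_on UNIV"
    by (rule Infinite_Sum.abs_summable_on_comparison_test'[OF hs]) (simp add: hx)
  then show xs: "x summable_on UNIV" by (rule Infinite_Sum.abs_summable_summable)
  have xd: "infsum x (UNIV - F) = infsum x UNIV - sum x F"
    using infsum_Diff[OF xs summable_on_finite[OF F]] F by simp
  have hd: "infsum h (UNIV - F) = infsum h UNIV - sum h F"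
    using infsum_Diff[OF hs summable_on_finite[OF F]] F by simp
  have nxd: "(\<lambda>k. norm (x k)) summable_on (UNIV - F)"
    using summable_on_subset[OF nx] by blast
  have hsd: "h summable_on (UNIV - F)"
    using summable_on_subset[OF hs] by blast
  have "\<bar>infsum x (UNIV - F)\<bar> \<le> infsum (\<lambda>k. norm (x k)) (UNIV - F)"
    using norm_infsum_bound[OF nxd] by simp
  also have "\<dots> \<le> infsum h (UNIV - F)"
    by (rule infsum_mono[OF nxd hsd]) (simp add: hx)
  finally show "\<bar>infsum x UNIV - sum x F\<bar> \<le> infsum h UNIV - sum h F"
    using xd hd by simp
qed

lemma sym_partial_limit:
  fixes x :: "int \<Rightarrow> real"
  assumes "x summable_on UNIV"
  shows "(\<lambda>n. sum x {-int n..int n}) \<longlonglongrightarrow> infsum x UNIV"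
proof -
  have lim: "(sum x \<longlongrightarrow> infsum x UNIV) (finite_subsets_at_top UNIV)"
    using has_sum_infsum[OF assms] unfolding has_sum_def .
  have fl: "filterlim (\<lambda>n. {-int n..int n}) (finite_subsets_at_top UNIV) sequentially"
    unfolding filterlim_def le_filter_def eventually_filtermap
  proof (intro allI impI)
    fix P :: "int set \<Rightarrow> bool"
    assume "eventually P (finite_subsets_at_top UNIV)"
    then have "\<exists>X. finite X \<and> X \<subseteq> UNIV \<and> (\<forall>Y. finite Y \<and> X \<subseteq> Y \<and> Y \<subseteq> UNIV \<longrightarrow> P Y)"
      unfolding eventually_finite_subsets_at_top .
    then obtain X where X1: "finite X" and XY: "\<forall>Y. finite Y \<and> X \<subseteq> Y \<and> Y \<subseteq> UNIV \<longrightarrow> P Y"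
      by blast
    obtain k where k: "abs ` X \<subseteq> {..k}" using finite_int_iff_bounded_le[THEN iffD1, OF X1] by blast
    show "\<forall>\<^sub>F n in sequentially. P {- int n..int n}"
      unfolding eventually_sequentially
    proof (intro exI allI impI)
      fix n assume "nat k \<le> n"
      then have kn: "k \<le> int n" by arith
      have "X \<subseteq> {- int n..int n}"
      proof
        fix z assume "z \<in> X"
        then have "\<bar>z\<bar> \<le> k" using k by blast
        then show "z \<in> {- int n..int n}" using kn by (simp add: abs_le_iff)
      qed
      then show "P {- int n..int n}" using XY[rule_format, of "{- int n..int n}"] by simp
    qed
  qed
  show ?thesis using filterlim_compose[OF lim fl] by simp
qed

lemma avg_abs_bound:
  fixes chi :: "real \<Rightarrow> real"
  assumes cont: "continuous_on UNIV chi"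
  shows "\<bar>avg_kernel chi m v\<bar> \<le> (1 / real m) * integral {- real m / 2 .. real m / 2} (\<lambda>y. \<bar>chi (v + y)\<bar>)"
proof -
  have c: "continuous_on UNIV (\<lambda>y. chi (v + y))"
    by (rule continuous_on_compose2[OF cont]) (auto intro!: continuous_intros)
  have i1: "(\<lambda>y. chi (v + y)) integrable_on {- real m / 2 .. real m / 2}"
    using c by (meson continuous_on_subset integrable_continuous_real subset_UNIV)
  have i2: "(\<lambda>y. \<bar>chi (v + y)\<bar>) integrable_on {- real m / 2 .. real m / 2}"
    using continuous_on_rabs[OF c] by (meson continuous_on_subset integrable_continuous_real subset_UNIV)
  have "\<bar>integral {- real m / 2 .. real m / 2} (\<lambda>y. chi (v + y))\<bar> \<le> integral {- real m / 2 .. real m / 2} (\<lambda>y. \<bar>chi (v + y)\<bar>)"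
    using Henstock_Kurzweil_Integration.integral_norm_bound_integral[OF i1 i2] by simp
  then show ?thesis unfolding avg_kernel_def
    by (simp add: abs_mult divide_simps mult_left_mono)
qed

lemma avg_summable:
  fixes chi :: "real \<Rightarrow> real"
  assumes cont: "continuous_on UNIV chi" and m: "m \<ge> 1"
    and chiS: "\<And>u. (\<lambda>k::int. \<bar>chi (u - real_of_int k)\<bar>) summable_on UNIV"
    and chiM: "\<And>u. (\<Sum>\<^sub>\<infinity>k::int. \<bar>chi (u - real_of_int k)\<bar>) \<le> M"
  shows "(\<lambda>k::int. \<bar>avg_kernel chi m (u - real_of_int k)\<bar>) summable_on UNIV"
proof (rule nonneg_bdd_above_summable_on)
  show "\<And>k. k \<in> UNIV \<Longrightarrow> 0 \<le> \<bar>avg_kernel chi m (u - real_of_int k)\<bar>" by simp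
  define c where "c = real m / 2"
  have mc: "- real m / 2 = - c" unfolding c_def by simp
  show "bdd_above (sum (\<lambda>k. \<bar>avg_kernel chi m (u - real_of_int k)\<bar>) ` {F. F \<subseteq> UNIV \<and> finite F})"
  proof (rule bdd_aboveI2)
    fix F :: "int set" assume "F \<in> {F. F \<subseteq> UNIV \<and> finite F}"
    then have F: "finite F" by simp
    have ci: "\<And>k. (\<lambda>y. \<bar>chi (u - real_of_int k + y)\<bar>) integrable_on {-c..c}"
    proof -
      fix k
      have "continuous_on UNIV (\<lambda>y. \<bar>chi (u - real_of_int k + y)\<bar>)"
        by (intro continuous_on_rabs continuous_on_compose2[OF cont]) (auto intro!: continuous_intros)
      then show "(\<lambda>y. \<bar>chi (u - real_of_int k + y)\<bar>) integrable_on {-c..c}"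
        by (meson continuous_on_subset integrable_continuous_real subset_UNIV)
    qed
    have "(\<Sum>k\<in>F. \<bar>avg_kernel chi m (u - real_of_int k)\<bar>)
        \<le> (\<Sum>k\<in>F. (1 / real m) * integral {-c..c} (\<lambda>y. \<bar>chi (u - real_of_int k + y)\<bar>))"
    proof (rule sum_mono)
      fix k
      show "\<bar>avg_kernel chi m (u - real_of_int k)\<bar> \<le> (1 / real m) * integral {-c..c} (\<lambda>y. \<bar>chi (u - real_of_int k + y)\<bar>)"
        using avg_abs_bound[OF cont, of m "u - real_of_int k"] by (simp add: c_def)
    qed
    also have "\<dots> = (1 / real m) * integral {-c..c} (\<lambda>y. \<Sum>k\<in>F. \<bar>chi (u + y - real_of_int k)\<bar>)"
      using Henstock_Kurzweil_Integration.integral_sum[OF F, of "\<lambda>k y. \<bar>chi (u - real_of_int k + y)\<bar>" "{-c..c}"] ci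
      by (simp add: sum_distrib_left algebra_simps)
    also have "\<dots> \<le> (1 / real m) * integral {-c..c} (\<lambda>y. M)"
    proof (rule mult_left_mono)
      show "integral {-c..c} (\<lambda>y. \<Sum>k\<in>F. \<bar>chi (u + y - real_of_int k)\<bar>) \<le> integral {-c..c} (\<lambda>y. M)"
      proof (rule integral_le)
        show "(\<lambda>y. \<Sum>k\<in>F. \<bar>chi (u + y - real_of_int k)\<bar>) integrable_on {-c..c}"
          by (rule integrable_sum[OF F]) (use ci in \<open>simp add: algebra_simps\<close>)
        show "(\<lambda>y. M) integrable_on {-c..c}" by (rule integrable_const_ivl)
        fix y
        have "(\<Sum>k\<in>F. \<bar>chi (u + y - real_of_int k)\<bar>) \<le> (\<Sum>\<^sub>\<infinity>k::int. \<bar>chi (u + y - real_of_int k)\<bar>)"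
          by (rule finite_sum_le_infsum[OF chiS F]) auto
        also have "\<dots> \<le> M" by (rule chiM)
        finally show "(\<Sum>k\<in>F. \<bar>chi (u + y - real_of_int k)\<bar>) \<le> M" .
      qed
      show "0 \<le> 1 / real m" by simp
    qed
    also have "\<dots> = M" using m unfolding c_def by (simp add: field_simps)
    finally show "(\<Sum>k\<in>F. \<bar>avg_kernel chi m (u - real_of_int k)\<bar>) \<le> M" .
  qed
qed

lemma infsum_diff_real:
  fixes p q :: "'a \<Rightarrow> real"
  assumes "p summable_on A" "q summable_on A"
  shows "infsum (\<lambda>k. p k - q k) A = infsum p A - infsum q A"
proof -
  have "(\<lambda>k. - q k) summable_on A" using assms(2) summable_on_uminus by blast
  then have "infsum (\<lambda>k. p k + - q k) A = infsum p A + infsum (\<lambda>k. - q k) A"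
    using infsum_add[OF assms(1)] by blast
  then show ?thesis by (simp add: infsum_uminus)
qed

lemma summable_on_diff_real:
  fixes p q :: "'a \<Rightarrow> real"
  assumes "p summable_on A" "q summable_on A"
  shows "(\<lambda>k. p k - q k) summable_on A"
proof -
  have "(\<lambda>k. - q k) summable_on A" using assms(2) summable_on_uminus by blast
  then have "(\<lambda>k. p k + - q k) summable_on A" using summable_on_add[OF assms(1)] by blast
  then show ?thesis by simp
qed

lemma tele_sum:
  fixes G :: "real \<Rightarrow> real"
  shows "(\<Sum>i=1..n. G (real i) - G (real i - 1)) = G (real n) - G 0"
  by (induction n) (simp_all add: algebra_simps)

theorem proposition3p2:
  fixes chi f f' :: "real \<Rightarrow> real" and w :: real and m :: nat and t :: real
  assumes "kernel_chi1 chi" and "kernel_chi2 chi"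
    and "f \<in> AC"
    and "AE x in lborel. (f has_real_derivative f' x) (at x)"
    and "w > 0" and "m \<ge> 1"
  shows "((\<lambda>s. Sbar chi m w f s) has_real_derivative
           (1 / real m) * (\<Sum>i=1..m. Kant chi w f' (t - (real m - 2 * (real i - 1)) / (2 * w)))) (at t)"
proof -
  have wpos: "w > 0" and m1: "m \<ge> 1" using assms by auto
  have cont: "continuous_on UNIV chi" using assms(1) by (simp add: kernel_chi1_def)
  have k2: "(\<exists>M. \<forall>u. (\<lambda>k::int. \<bar>chi (u - real_of_int k)\<bar>) summable_on UNIV \<and>
             (\<Sum>\<^sub>\<infinity>k::int. \<bar>chi (u - real_of_int k)\<bar>) \<le> M) \<and>
     (\<forall>C. compact C \<longrightarrow>
        uniform_limit C (\<lambda>n u. \<Sum>k\<in>{- int n..int n}. \<bar>chi (u - real_of_int k)\<bar>)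
                        (\<lambda>u. \<Sum>\<^sub>\<infinity>k::int. \<bar>chi (u - real_of_int k)\<bar>) sequentially)"
    using assms(2) unfolding kernel_chi2_def .
  then obtain M where M: "\<forall>u. (\<lambda>k::int. \<bar>chi (u - real_of_int k)\<bar>) summable_on UNIV \<and>
             (\<Sum>\<^sub>\<infinity>k::int. \<bar>chi (u - real_of_int k)\<bar>) \<le> M" by (elim conjE exE)
  have chiS: "\<And>u. (\<lambda>k::int. \<bar>chi (u - real_of_int k)\<bar>) summable_on UNIV" using M by blast
  have chiM: "\<And>u. (\<Sum>\<^sub>\<infinity>k::int. \<bar>chi (u - real_of_int k)\<bar>) \<le> M" using M by blast
  have unif: "\<And>C. compact C \<Longrightarrow> uniform_limit C (\<lambda>n u. \<Sum>k\<in>{- int n..int n}. \<bar>chi (u - real_of_int k)\<bar>)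
                        (\<lambda>u. \<Sum>\<^sub>\<infinity>k::int. \<bar>chi (u - real_of_int k)\<bar>) sequentially"
    using k2 by blast
  have fBV: "f \<in> BV" and fAC: "f \<in> AC_loc" using assms(3) by (auto simp: AC_def)
  obtain B where B: "\<And>x. \<bar>f x\<bar> \<le> B" using bv_bounded[OF fBV] by blast
  have B0: "0 \<le> B" using B[of 0] by linarith
  obtain E where E: "negligible E" and der: "\<And>x. x \<notin> E \<Longrightarrow> (f has_real_derivative f' x) (at x)"
    using ae_negligible[OF assms(4)] by blast
  define c where "c = real m / 2"
  have c0: "c \<ge> 0" unfolding c_def by simp
  define a where "a k s = f (real_of_int k / w) * avg_kernel chi m (w * s - real_of_int k)" for k :: int and s
  define a' where "a' k s = f (real_of_int k / w) * (w * ((1 / real m) *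
      (chi (w * s - real_of_int k + c) - chi (w * s - real_of_int k - c))))" for k :: int and s
  define D where "D s = (\<Sum>\<^sub>\<infinity>k::int. a' k s)" for s
  define K where "K = B * w / real m"
  have K0: "K \<ge> 0" unfolding K_def using B0 wpos by simp

  have da: "(a k has_real_derivative a' k s) (at s)" for k s
  proof -
    have d1: "((\<lambda>s. w * s - real_of_int k) has_real_derivative w) (at s)"
      by (auto intro!: derivative_eq_intros)
    have "((\<lambda>s. avg_kernel chi m (w * s - real_of_int k)) has_real_derivative
        (1 / real m) * (chi (w * s - real_of_int k + real m / 2) - chi (w * s - real_of_int k - real m / 2)) * w) (at s)"
      by (rule DERIV_chain2[OF avg_deriv[OF cont] d1])
    then have "((\<lambda>s. f (real_of_int k / w) * avg_kernel chi m (w * s - real_of_int k)) has_real_derivative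
        f (real_of_int k / w) * ((1 / real m) * (chi (w * s - real_of_int k + real m / 2) - chi (w * s - real_of_int k - real m / 2)) * w)) (at s)"
      by (rule DERIV_cmult)
    then show ?thesis unfolding a_def a'_def c_def by (simp add: mult_ac)
  qed

  have a'bound: "\<bar>a' k s\<bar> \<le> K * (\<bar>chi (w * s + c - real_of_int k)\<bar> + \<bar>chi (w * s - c - real_of_int k)\<bar>)" for k s
  proof -
    have e1: "w * s - real_of_int k + c = w * s + c - real_of_int k" by simp
    have e2: "w * s - real_of_int k - c = w * s - c - real_of_int k" by simp
    have "\<bar>a' k s\<bar> = \<bar>f (real_of_int k / w)\<bar> * (w / real m) *
        \<bar>chi (w * s + c - real_of_int k) - chi (w * s - c - real_of_int k)\<bar>"
      unfolding a'_def e1 e2 using wpos by (simp add: abs_mult)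
    also have "\<dots> \<le> B * (w / real m) * (\<bar>chi (w * s + c - real_of_int k)\<bar> + \<bar>chi (w * s - c - real_of_int k)\<bar>)"
      by (intro mult_mono B abs_triangle_ineq4) (use wpos B0 in auto)
    finally show ?thesis unfolding K_def by simp
  qed
  have hS: "(\<lambda>k. K * (\<bar>chi (w * s + c - real_of_int k)\<bar> + \<bar>chi (w * s - c - real_of_int k)\<bar>)) summable_on UNIV" for s
    by (intro summable_on_cmult_right summable_on_add chiS)
  have a'S: "(\<lambda>k. a' k s) summable_on UNIV" for s
    using tail_bound(1)[OF hS a'bound, of "{}"] by simp
  have aS: "(\<lambda>k. a k s) summable_on UNIV" for s
  proof -
    have "(\<lambda>k. B * \<bar>avg_kernel chi m (w * s - real_of_int k)\<bar>) summable_on UNIV"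
      by (intro summable_on_cmult_right avg_summable[OF cont m1 chiS chiM])
    moreover have "\<bar>a k s\<bar> \<le> B * \<bar>avg_kernel chi m (w * s - real_of_int k)\<bar>" for k
      unfolding a_def abs_mult by (intro mult_right_mono B) simp
    ultimately show ?thesis using tail_bound(1)[of _ "\<lambda>k. a k s" "{}"] by blast
  qed

  define S where "S = ball t 1"
  define C where "C = cball (w * t) (w + c)"
  have Cc: "compact C" unfolding C_def by simp
  have inC: "w * s + c \<in> C \<and> w * s - c \<in> C" if "s \<in> S" for s
  proof -
    have "\<bar>t - s\<bar> < 1" using that unfolding S_def by (simp add: dist_real_def)
    then have "\<bar>w * t - w * s\<bar> < w" using wpos
      by (metis abs_mult abs_of_pos mult.right_neutral mult_strict_left_mono right_diff_distrib)
    then show ?thesis unfolding C_def using c0 by (auto simp: dist_real_def)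
  qed
  define P where "P n u = (\<Sum>k\<in>{- int n..int n}. \<bar>chi (u - real_of_int k)\<bar>)" for n u
  define T where "T u = (\<Sum>\<^sub>\<infinity>k::int. \<bar>chi (u - real_of_int k)\<bar>)" for u
  have unifC: "\<forall>\<^sub>F n in sequentially. \<forall>x\<in>C. dist (P n x) (T x) < e" if "e > 0" for e
    using unif[OF Cc] that unfolding uniform_limit_iff P_def T_def by blast
  have PT: "P n u \<le> T u" for n u
    unfolding P_def T_def by (rule finite_sum_le_infsum[OF chiS]) auto

  have nle: "\<forall>\<^sub>F n in sequentially. \<forall>x\<in>S. \<forall>h.
      norm ((\<Sum>k\<in>{- int n..int n}. a' k x) * h - D x * h) \<le> e * norm h" if e: "e > 0" for e
  proof -
    define e' where "e' = e / (2 * K + 1)"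
    have e'pos: "e' > 0" unfolding e'_def using e K0 by simp
    have Ke: "K * (2 * e') \<le> e" unfolding e'_def using e K0 by (simp add: field_simps)
    show ?thesis using unifC[OF e'pos]
    proof eventually_elim
      case (elim n)
      show ?case
      proof (intro ballI allI)
        fix x h assume xS: "x \<in> S"
        let ?v1 = "w * x + c" and ?v2 = "w * x - c"
        have tb: "\<bar>D x - (\<Sum>k\<in>{- int n..int n}. a' k x)\<bar> \<le>
          infsum (\<lambda>k. K * (\<bar>chi (?v1 - real_of_int k)\<bar> + \<bar>chi (?v2 - real_of_int k)\<bar>)) UNIV
          - (\<Sum>k\<in>{- int n..int n}. K * (\<bar>chi (?v1 - real_of_int k)\<bar> + \<bar>chi (?v2 - real_of_int k)\<bar>))"
          unfolding D_def by (rule tail_bound(2)[OF hS a'bound]) simp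
        also have "\<dots> = K * ((T ?v1 - P n ?v1) + (T ?v2 - P n ?v2))"
          unfolding T_def P_def
          by (subst infsum_cmult_right', subst infsum_add[OF chiS[of ?v1] chiS[of ?v2]])
             (simp add: sum_distrib_left sum.distrib algebra_simps)
        also have "\<dots> \<le> K * (e' + e')"
        proof (intro mult_left_mono add_mono K0)
          show "T ?v1 - P n ?v1 \<le> e'" using elim inC[OF xS] by (auto simp: dist_real_def)
          show "T ?v2 - P n ?v2 \<le> e'" using elim inC[OF xS] by (auto simp: dist_real_def)
        qed
        also have "\<dots> \<le> e" using Ke by simp
        finally have "\<bar>(\<Sum>k\<in>{- int n..int n}. a' k x) - D x\<bar> \<le> e" by (simp add: abs_minus_commute)
        then show "norm ((\<Sum>k\<in>{- int n..int n}. a' k x) * h - D x * h) \<le> e * norm h"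
          by (simp add: left_diff_distrib[symmetric] abs_mult mult_right_mono)
      qed
    qed
  qed

  have conv: "(\<lambda>n. \<Sum>k\<in>{- int n..int n}. a k s) \<longlonglongrightarrow> Sbar chi m w f s" for s
    using sym_partial_limit[OF aS[of s]] unfolding Sbar_def a_def .
  have derf: "((\<lambda>s. \<Sum>k\<in>{- int n..int n}. a k s) has_derivative (\<lambda>h. (\<Sum>k\<in>{- int n..int n}. a' k x) * h)) (at x within S)"
    for n x
  proof -
    have "((\<lambda>s. \<Sum>k\<in>{- int n..int n}. a k s) has_real_derivative (\<Sum>k\<in>{- int n..int n}. a' k x)) (at x)"
      by (rule DERIV_sum) (rule da)
    then have "((\<lambda>s. \<Sum>k\<in>{- int n..int n}. a k s) has_real_derivative (\<Sum>k\<in>{- int n..int n}. a' k x)) (at x within S)"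
      by (rule has_field_derivative_at_within)
    then show ?thesis unfolding has_field_derivative_def by simp
  qed
  have tS: "t \<in> S" unfolding S_def by simp
  obtain g where g: "\<forall>x\<in>S. (\<lambda>n. \<Sum>k\<in>{- int n..int n}. a k x) \<longlonglongrightarrow> g x \<and>
      (g has_derivative (\<lambda>h. D x * h)) (at x within S)"
    using has_derivative_sequence[of S "\<lambda>n s. \<Sum>k\<in>{- int n..int n}. a k s"
        "\<lambda>n x h. (\<Sum>k\<in>{- int n..int n}. a' k x) * h" "\<lambda>x h. D x * h" t "Sbar chi m w f t"]
      derf nle conv[of t] tS unfolding S_def by auto
  have gS: "g x = Sbar chi m w f x" if "x \<in> S" for x
    using g that conv[of x] LIMSEQ_unique by blast
  have "(g has_derivative (\<lambda>h. D t * h)) (at t)"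
    using g tS at_within_open[OF tS] unfolding S_def by (metis open_ball)
  then have "(g has_real_derivative D t) (at t)"
    unfolding has_field_derivative_def by simp
  then have dS: "((\<lambda>s. Sbar chi m w f s) has_real_derivative D t) (at t)"
    by (rule has_field_derivative_transform_within_open[of _ _ _ S]) (use gS tS in \<open>auto simp: S_def\<close>)

  have KI: "integral {real_of_int k / w .. (real_of_int k + 1) / w} f' = f ((real_of_int k + 1) / w) - f (real_of_int k / w)"
    for k :: int
  proof -
    have "real_of_int k / w \<le> (real_of_int k + 1) / w" using wpos by (intro divide_right_mono) auto
    from kant_int[OF fAC E der this] show ?thesis .
  qed
  define v where "v = w * t - c"
  define G where "G y = (\<Sum>\<^sub>\<infinity>k::int. w * f (real_of_int k / w) * chi (v + y - real_of_int k))" for y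
  have GS: "(\<lambda>k. w * f (real_of_int k / w) * chi (z - real_of_int k)) summable_on UNIV" for z
  proof -
    have "(\<lambda>k. (w * B) * \<bar>chi (z - real_of_int k)\<bar>) summable_on UNIV"
      by (intro summable_on_cmult_right chiS)
    moreover have "\<bar>w * f (real_of_int k / w) * chi (z - real_of_int k)\<bar> \<le> (w * B) * \<bar>chi (z - real_of_int k)\<bar>" for k
      unfolding abs_mult using wpos B by (intro mult_right_mono) (auto intro: mult_left_mono)
    ultimately show ?thesis using tail_bound(1)[of _ "\<lambda>k. w * f (real_of_int k / w) * chi (z - real_of_int k)" "{}"] by blast
  qed
  have GS1: "(\<lambda>k. w * f ((real_of_int k + 1) / w) * chi (z - real_of_int k)) summable_on UNIV" for z
  proof -
    have "(\<lambda>k. (w * B) * \<bar>chi (z - real_of_int k)\<bar>) summable_on UNIV"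
      by (intro summable_on_cmult_right chiS)
    moreover have "\<bar>w * f ((real_of_int k + 1) / w) * chi (z - real_of_int k)\<bar> \<le> (w * B) * \<bar>chi (z - real_of_int k)\<bar>" for k
      unfolding abs_mult using wpos B by (intro mult_right_mono) (auto intro: mult_left_mono)
    ultimately show ?thesis using tail_bound(1)[of _ "\<lambda>k. w * f ((real_of_int k + 1) / w) * chi (z - real_of_int k)" "{}"] by blast
  qed
  have Kant_i: "Kant chi w f' (t - (real m - 2 * (real i - 1)) / (2 * w)) = G (real i) - G (real i - 1)" for i :: nat
  proof -
    define z where "z = v + (real i - 1)"
    have wt: "w * (t - (real m - 2 * (real i - 1)) / (2 * w)) = z"
      unfolding z_def v_def c_def using wpos by (simp add: field_simps)
    have "Kant chi w f' (t - (real m - 2 * (real i - 1)) / (2 * w)) =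
        (\<Sum>\<^sub>\<infinity>k::int. w * f ((real_of_int k + 1) / w) * chi (z - real_of_int k) - w * f (real_of_int k / w) * chi (z - real_of_int k))"
      unfolding Kant_def wt KI by (simp add: algebra_simps)
    also have "\<dots> = (\<Sum>\<^sub>\<infinity>k::int. w * f ((real_of_int k + 1) / w) * chi (z - real_of_int k)) - G (real i - 1)"
      by (subst infsum_diff_real[OF GS1 GS]) (simp add: G_def z_def)
    also have "(\<Sum>\<^sub>\<infinity>k::int. w * f ((real_of_int k + 1) / w) * chi (z - real_of_int k)) = G (real i)"
    proof -
      have bij: "bij_betw (\<lambda>j::int. j - 1) UNIV UNIV"
        by (rule bij_betwI[of _ _ _ "\<lambda>j. j + 1"]) auto
      have "(\<Sum>\<^sub>\<infinity>k::int. w * f ((real_of_int k + 1) / w) * chi (z - real_of_int k)) =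
          (\<Sum>\<^sub>\<infinity>j::int. w * f ((real_of_int (j - 1) + 1) / w) * chi (z - real_of_int (j - 1)))"
        using infsum_reindex_bij_betw[OF bij, of "\<lambda>k. w * f ((real_of_int k + 1) / w) * chi (z - real_of_int k)"] by simp
      also have "\<dots> = G (real i)" unfolding G_def z_def by (simp add: algebra_simps)
      finally show ?thesis .
    qed
    finally show ?thesis .
  qed
  have "(\<Sum>i=1..m. Kant chi w f' (t - (real m - 2 * (real i - 1)) / (2 * w))) = G (real m) - G 0"
  proof -
    have "(\<Sum>i=1..m. Kant chi w f' (t - (real m - 2 * (real i - 1)) / (2 * w))) = (\<Sum>i=1..m. G (real i) - G (real i - 1))"
      by (rule sum.cong[OF refl]) (rule Kant_i)
    then show ?thesis using tele_sum[of G m] by simp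
  qed
  also have "G (real m) - G 0 = real m * D t"
  proof -
    have "D t = (\<Sum>\<^sub>\<infinity>k::int. (1 / real m) * (w * f (real_of_int k / w) * chi ((w * t + c) - real_of_int k)
        - w * f (real_of_int k / w) * chi ((w * t - c) - real_of_int k)))"
      unfolding D_def a'_def by (intro infsum_cong) (simp add: algebra_simps)
    also have "\<dots> = (1 / real m) * (G (real m) - G 0)"
      by (subst infsum_cmult_right', subst infsum_diff_real[OF GS GS])
         (simp add: G_def v_def c_def algebra_simps)
    finally show ?thesis using m1 by simp
  qed
  finally have "(1 / real m) * (\<Sum>i=1..m. Kant chi w f' (t - (real m - 2 * (real i - 1)) / (2 * w))) = D t"
    using m1 by simp
  then show ?thesis using dS by simp
qed

end
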